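(* The maps $\sigma,\tau,\theta:E\to E$ defined by \[\sigma(A)=-A^*,\qquad \tau(A)=-A^{\mathrm t},\qquad \theta(A)=TAT^{-1}\] pairwise commute.
   Context: Setting: - $V$ is a finite-dimensional complex inner product space, and $W=V\oplus V^*$ carries the orthogonal-sum unitary structure $\langle\,,\rangle$, where $V^*$ gets the structure transported from $V$ via $C_0v=\langle v,\cdot\rangle_V$, i.e. $\langle f,\tilde f\rangle=\langle C_0^{-1}\tilde f,C_0^{-1}f\rangle_V$. - $b$ is either $s(v_1+f_1,v_2+f_2)=f_1(v_2)+f_2(v_1)$ or $a(v_1+f_1,v_2+f_2)=f_1(v_2)-f_2(v_1)$. - $C:W\to W$ is antilinear with $C|_V=C_0$ and $C|_{V^*}=C_0^{-1}$ (if $b=s$) or $-C_0^{-1}$ (if $b=a$), so that $b(Cw_1,w_2)=\langle w_1,w_2\rangle$. - $E$ is either $\mathrm{End}(W)$ or $\mathrm{End}(V)\oplus\mathrm{End}(V^* )$. - $A^*$ is the adjoint with respect to $\langle\,,\rangle$, and $A^{\mathrm t}$ the adjoint with respect to $b$ ($b(Aw_1,w_2)=b(w_1,A^{\mathrm t}w_2)$). - $T:W\to W$ is antiunitary, commutes with $C$, satisfies $T^2=\pm\mathrm{Id}$, and is either nonmixing ($T(V)=V$, $T(V^* )=V^*$) or mixing ($T(V)=V^*$, $T(V^* )=V$). *)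

theory Defs
  imports "HOL-Analysis.Analysis"
begin

text \<open>V is modelled as the complex coordinate space complex^('n::finite) ('n an arbitrary finite
index type) with inner product antilinear in the first argument,
vinner v w = sum_i cnj(v_i) w_i.  A functional f in V* is represented by its coordinate
vector (f_1,...,f_n), acting by f(v) = sum_i f_i v_i.  W = V (+) V* is the type of pairs.\<close>

type_synonym 'n W = "(complex^'n) \<times> (complex^'n)"

definition vscale :: "complex \<Rightarrow> complex^('n::finite) \<Rightarrow> complex^('n::finite)" where
  "vscale c v = (\<chi> i. c * v $ i)"

definition vinner :: "complex^('n::finite) \<Rightarrow> complex^('n::finite) \<Rightarrow> complex" where
  "vinner v w = (\<Sum>i\<in>UNIV. cnj (v $ i) * w $ i)"

definition pair :: "complex^('n::finite) \<Rightarrow> complex^('n::finite) \<Rightarrow> complex" where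
  "pair f v = (\<Sum>i\<in>UNIV. f $ i * v $ i)"

text \<open>C0 v = <v, . >_V, as a functional\<close>
definition C0 :: "complex^('n::finite) \<Rightarrow> complex^('n::finite)" where
  "C0 v = (\<chi> i. cnj (v $ i))"

definition dinner :: "complex^('n::finite) \<Rightarrow> complex^('n::finite) \<Rightarrow> complex" where
  "dinner f g = vinner (inv C0 g) (inv C0 f)"

definition wadd :: "('n::finite) W \<Rightarrow> ('n::finite) W \<Rightarrow> ('n::finite) W" where
  "wadd x y = (fst x + fst y, snd x + snd y)"

definition wscale :: "complex \<Rightarrow> ('n::finite) W \<Rightarrow> ('n::finite) W" where
  "wscale c x = (vscale c (fst x), vscale c (snd x))"

definition wneg :: "('n::finite) W \<Rightarrow> ('n::finite) W" where
  "wneg x = (- fst x, - snd x)"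

definition winner :: "('n::finite) W \<Rightarrow> ('n::finite) W \<Rightarrow> complex" where
  "winner x y = vinner (fst x) (fst y) + dinner (snd x) (snd y)"

text \<open>the bilinear form b: symmetric s (symm = True) or alternating a (symm = False)\<close>
definition bform :: "bool \<Rightarrow> ('n::finite) W \<Rightarrow> ('n::finite) W \<Rightarrow> complex" where
  "bform symm x y = (if symm then pair (snd x) (fst y) + pair (snd y) (fst x)
                           else pair (snd x) (fst y) - pair (snd y) (fst x))"

definition Cmap :: "bool \<Rightarrow> ('n::finite) W \<Rightarrow> ('n::finite) W" where
  "Cmap symm x = (if symm then inv C0 (snd x) else - inv C0 (snd x), C0 (fst x))"

definition clinear_W :: "(('n::finite) W \<Rightarrow> ('n::finite) W) \<Rightarrow> bool" where
  "clinear_W A \<longleftrightarrow> (\<forall>x y. A (wadd x y) = wadd (A x) (A y)) \<and>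
                    (\<forall>c x. A (wscale c x) = wscale c (A x))"

definition antilinear_W :: "(('n::finite) W \<Rightarrow> ('n::finite) W) \<Rightarrow> bool" where
  "antilinear_W A \<longleftrightarrow> (\<forall>x y. A (wadd x y) = wadd (A x) (A y)) \<and>
                    (\<forall>c x. A (wscale c x) = wscale (cnj c) (A x))"

definition Vsub :: "('n::finite) W set" where "Vsub = {x. snd x = 0}"
definition Dsub :: "('n::finite) W set" where "Dsub = {x. fst x = 0}"

text \<open>E = End(W) (full = True) or End(V) (+) End(V*) (full = False)\<close>
definition Ealg :: "bool \<Rightarrow> (('n::finite) W \<Rightarrow> ('n::finite) W) set" where
  "Ealg full = (if full then {A. clinear_W A}
                else {A. clinear_W A \<and> A ` Vsub \<subseteq> Vsub \<and> A ` Dsub \<subseteq> Dsub})"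

definition adj :: "(('n::finite) W \<Rightarrow> ('n::finite) W) \<Rightarrow> (('n::finite) W \<Rightarrow> ('n::finite) W)" where
  "adj A = (THE B. \<forall>x y. winner (A x) y = winner x (B y))"

definition btrans :: "bool \<Rightarrow> (('n::finite) W \<Rightarrow> ('n::finite) W) \<Rightarrow> (('n::finite) W \<Rightarrow> ('n::finite) W)" where
  "btrans symm A = (THE B. \<forall>x y. bform symm (A x) y = bform symm x (B y))"

definition antiunitary_W :: "(('n::finite) W \<Rightarrow> ('n::finite) W) \<Rightarrow> bool" where
  "antiunitary_W T \<longleftrightarrow> antilinear_W T \<and> bij T \<and>
     (\<forall>x y. winner (T x) (T y) = cnj (winner x y))"

definition sigma_map :: "(('n::finite) W \<Rightarrow> ('n::finite) W) \<Rightarrow> (('n::finite) W \<Rightarrow> ('n::finite) W)" where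
  "sigma_map A = (\<lambda>w. wneg (adj A w))"

definition tau_map :: "bool \<Rightarrow> (('n::finite) W \<Rightarrow> ('n::finite) W) \<Rightarrow> (('n::finite) W \<Rightarrow> ('n::finite) W)" where
  "tau_map symm A = (\<lambda>w. wneg (btrans symm A w))"

definition theta_map :: "(('n::finite) W \<Rightarrow> ('n::finite) W) \<Rightarrow> (('n::finite) W \<Rightarrow> ('n::finite) W) \<Rightarrow> (('n::finite) W \<Rightarrow> ('n::finite) W)" where
  "theta_map T A = T \<circ> A \<circ> inv T"

end

theory Submission imports Defs begin

lemma C0_C0[simp]: "C0 (C0 v) = v" by (simp add: C0_def vec_eq_iff)
lemma inv_C0[simp]: "inv C0 = C0" by (rule inv_equality) simp_all

lemma winner_alt: "winner x y = (\<Sum>i\<in>UNIV. cnj (fst x $ i) * fst y $ i) + (\<Sum>i\<in>UNIV. cnj (snd x $ i) * snd y $ i)"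
  by (simp add: winner_def dinner_def vinner_def C0_def mult.commute)

lemma wadd_eq[simp]: "wadd x y = x + y" by (simp add: wadd_def prod_eq_iff)
lemma wneg_eq[simp]: "wneg x = - x" by (simp add: wneg_def prod_eq_iff)
lemma wscale_eq: "wscale c x = (c *s fst x, c *s snd x)"
  by (simp add: wscale_def vscale_def vector_scalar_mult_def)

lemma winner_cnj: "winner y x = cnj (winner x y)"
  by (simp add: winner_alt mult.commute)

lemma winner_neg_left[simp]: "winner (-x) y = - winner x y"
  by (simp add: winner_alt sum_negf)
lemma winner_neg_right[simp]: "winner x (-y) = - winner x y"
  by (simp add: winner_alt sum_negf)

lemma winner_add_left: "winner (x + z) y = winner x y + winner z y"
  by (simp add: winner_alt sum.distrib algebra_simps)
lemma winner_scale_left: "winner (wscale c x) y = cnj c * winner x y"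
  by (simp add: winner_alt wscale_eq sum_distrib_left algebra_simps)
lemma winner_sum_left: "winner (sum f S) y = (\<Sum>s\<in>S. winner (f s) y)"
proof (induction S rule: infinite_finite_induct)
  case (infinite S) then show ?case by (simp add: winner_alt)
next
  case empty then show ?case by (simp add: winner_alt)
next
  case (insert x F) then show ?case by (simp add: winner_add_left)
qed

lemma sum_axis: "(\<Sum>j\<in>UNIV. cnj (axis i 1 $ j) * (w::complex^'n::finite) $ j) = w $ i"
proof -
  have "(\<Sum>j\<in>UNIV. cnj (axis i 1 $ j) * w $ j) = (\<Sum>j\<in>UNIV. if j = i then w $ j else 0)"
    by (rule sum.cong) (auto simp: axis_def)
  also have "... = w $ i" by simp
  finally show ?thesis .
qed

lemma winner_nondeg: assumes "\<And>x. winner x u = winner x v" shows "u = v"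
proof -
  have a: "fst u $ i = fst v $ i" for i
    using assms[of "(axis i 1, 0)"] by (simp add: winner_alt sum_axis)
  have b: "snd u $ i = snd v $ i" for i
    using assms[of "(0, axis i 1)"] by (simp add: winner_alt sum_axis)
  show ?thesis using a b by (simp add: prod_eq_iff vec_eq_iff)
qed

definition Ci :: "bool \<Rightarrow> ('n::finite) W \<Rightarrow> 'n W" where
  "Ci symm x = (C0 (snd x), if symm then C0 (fst x) else - C0 (fst x))"

lemma Ci_C[simp]: "Ci symm (Cmap symm x) = x" by (simp add: Ci_def Cmap_def C0_def prod_eq_iff vec_eq_iff)
lemma C_Ci[simp]: "Cmap symm (Ci symm x) = x" by (simp add: Ci_def Cmap_def C0_def prod_eq_iff vec_eq_iff)
lemma Ci_neg: "Ci symm (- x) = - Ci symm x" by (simp add: Ci_def C0_def prod_eq_iff vec_eq_iff)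

lemma bform_alt: "bform symm x y = winner (Ci symm x) y"
  by (simp add: bform_def winner_alt Ci_def C0_def pair_def sum_negf mult.commute)

lemma Ci_unitary: "winner (Ci symm p) (Ci symm q) = winner q p"
  by (simp add: winner_alt Ci_def C0_def mult.commute)

lemma bform_nondeg: assumes "\<And>x. bform symm x u = bform symm x v" shows "u = v"
proof (rule winner_nondeg)
  fix z show "winner z u = winner z v" using assms[of "Cmap symm z"] by (simp add: bform_alt)
qed

definition isadj :: "(('n::finite) W \<Rightarrow> 'n W) \<Rightarrow> ('n W \<Rightarrow> 'n W) \<Rightarrow> bool" where
  "isadj A B \<longleftrightarrow> (\<forall>x y. winner (A x) y = winner x (B y))"

lemma adj_eq: assumes "isadj A B" shows "adj A = B"
  unfolding adj_def
proof (rule the_equality)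
  show "\<forall>x y. winner (A x) y = winner x (B y)" using assms unfolding isadj_def by metis
next
  fix B' assume h: "\<forall>x y. winner (A x) y = winner x (B' y)"
  show "B' = B"
  proof
    fix y show "B' y = B y"
    proof (rule winner_nondeg)
      fix x
      have "winner (A x) y = winner x (B' y)" using h by blast
      moreover have "winner (A x) y = winner x (B y)" using assms unfolding isadj_def by blast
      ultimately show "winner x (B' y) = winner x (B y)" by simp
    qed
  qed
qed

lemma btrans_eq: assumes "\<forall>x y. bform symm (A x) y = bform symm x (B y)" shows "btrans symm A = B"
  unfolding btrans_def
proof (rule the_equality)
  show "\<forall>x y. bform symm (A x) y = bform symm x (B y)" using assms by simp
next
  fix B' assume h: "\<forall>x y. bform symm (A x) y = bform symm x (B' y)"
  show "B' = B"
  proof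
    fix y show "B' y = B y"
    proof (rule bform_nondeg)
      fix x
      have "bform symm (A x) y = bform symm x (B' y)" using h by blast
      moreover have "bform symm (A x) y = bform symm x (B y)" using assms by blast
      ultimately show "bform symm x (B' y) = bform symm x (B y)" by simp
    qed
  qed
qed

lemma isadj_sym: "isadj A B \<Longrightarrow> isadj B A"
  unfolding isadj_def
proof (intro allI)
  fix x y assume h: "\<forall>x y. winner (A x) y = winner x (B y)"
  have "winner (B x) y = cnj (winner y (B x))" by (rule winner_cnj)
  also have "... = cnj (winner (A y) x)" using h by metis
  also have "... = winner x (A y)" by (rule winner_cnj[symmetric])
  finally show "winner (B x) y = winner x (A y)" .
qed

lemma isadj_neg: "isadj A B \<Longrightarrow> isadj (\<lambda>w. - A w) (\<lambda>w. - B w)"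
  unfolding isadj_def by simp

lemma isadj_conj:
  assumes "isadj A B" and U: "\<And>p q. winner (U p) (U q) = winner q p"
    and UV: "\<And>x. U (V x) = x"
  shows "isadj (\<lambda>x. U (A (V x))) (\<lambda>y. U (B (V y)))"
  unfolding isadj_def
proof (intro allI)
  fix x y
  have "winner (U (A (V x))) y = winner (U (A (V x))) (U (V y))" by (simp add: UV)
  also have "... = winner (V y) (A (V x))" by (rule U)
  also have "... = cnj (winner (A (V x)) (V y))" by (rule winner_cnj)
  also have "... = cnj (winner (V x) (B (V y)))" using assms(1) unfolding isadj_def by metis
  also have "... = winner (B (V y)) (V x)" by (rule winner_cnj[symmetric])
  also have "... = winner (U (V x)) (U (B (V y)))" by (rule U[symmetric])
  also have "... = winner x (U (B (V y)))" by (simp add: UV)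
  finally show "winner (U (A (V x))) y = winner x (U (B (V y)))" .
qed

lemma isbt:
  assumes "isadj A B"
  shows "\<forall>x y. bform symm (A x) y = bform symm x (Ci symm (B (Cmap symm y)))"
proof (intro allI)
  fix x y
  have "bform symm (A x) y = winner (Ci symm (A x)) (Ci symm (Cmap symm y))" by (simp add: bform_alt)
  also have "... = winner (Cmap symm y) (A x)" by (rule Ci_unitary)
  also have "... = cnj (winner (A x) (Cmap symm y))" by (rule winner_cnj)
  also have "... = cnj (winner x (B (Cmap symm y)))" using assms unfolding isadj_def by metis
  also have "... = winner (B (Cmap symm y)) x" by (rule winner_cnj[symmetric])
  also have "... = winner (Ci symm x) (Ci symm (B (Cmap symm y)))" by (rule Ci_unitary[symmetric])
  also have "... = bform symm x (Ci symm (B (Cmap symm y)))" by (simp add: bform_alt)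
  finally show "bform symm (A x) y = bform symm x (Ci symm (B (Cmap symm y)))" .
qed

lemma btrans_adj: "isadj A B \<Longrightarrow> btrans symm A = (\<lambda>y. Ci symm (B (Cmap symm y)))"
  by (rule btrans_eq) (rule isbt)

lemma adj_exists: assumes "clinear_W A" shows "\<exists>B. isadj A B"
proof -
  have add: "A (x + y) = A x + A y" for x y using assms unfolding clinear_W_def wadd_eq by blast
  have scl: "A (wscale c x) = wscale c (A x)" for c x using assms unfolding clinear_W_def by blast
  have A0: "A 0 = 0" using add[of 0 0] by simp
  have Asum: "A (sum f S) = (\<Sum>s\<in>S. A (f s))" for f and S :: "'b set"
  proof (induction S rule: infinite_finite_induct)
    case (infinite S) then show ?case by (simp add: A0)
  next
    case empty then show ?case by (simp add: A0)
  next
    case (insert x F) then show ?case by (simp add: add)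
  qed
  define E1 :: "'a \<Rightarrow> 'a W" where "E1 i = (axis i 1, 0)" for i
  define E2 :: "'a \<Rightarrow> 'a W" where "E2 i = (0, axis i 1)" for i
  have dec: "x = (\<Sum>i\<in>UNIV. wscale (fst x $ i) (E1 i)) + (\<Sum>i\<in>UNIV. wscale (snd x $ i) (E2 i))" for x :: "'a W"
    by (simp add: prod_eq_iff fst_sum snd_sum wscale_eq E1_def E2_def basis_expansion)
  define B where "B y = ((\<chi> i. winner (A (E1 i)) y), (\<chi> i. winner (A (E2 i)) y))" for y
  have "winner (A x) y = winner x (B y)" for x y
  proof -
    have "winner (A x) y = winner (A ((\<Sum>i\<in>UNIV. wscale (fst x $ i) (E1 i)) + (\<Sum>i\<in>UNIV. wscale (snd x $ i) (E2 i)))) y"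
      using dec[of x] by simp
    also have "... = (\<Sum>i\<in>UNIV. cnj (fst x $ i) * winner (A (E1 i)) y) + (\<Sum>i\<in>UNIV. cnj (snd x $ i) * winner (A (E2 i)) y)"
      by (simp add: add Asum scl winner_add_left winner_sum_left winner_scale_left)
    also have "... = winner x (B y)" by (simp add: winner_alt B_def)
    finally show ?thesis .
  qed
  then show ?thesis unfolding isadj_def by blast
qed

theorem proposition4p3:
  fixes T :: "'n::finite W \<Rightarrow> 'n W" and symm full :: bool
  assumes "antiunitary_W T"
    and "T \<circ> Cmap symm = Cmap symm \<circ> T"
    and "T \<circ> T = id \<or> T \<circ> T = wneg"
    and "(T ` Vsub = Vsub \<and> T ` Dsub = Dsub) \<or> (T ` Vsub = Dsub \<and> T ` Dsub = Vsub)"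
  shows "\<forall>A\<in>Ealg full.
           sigma_map (tau_map symm A) = tau_map symm (sigma_map A) \<and>
           sigma_map (theta_map T A) = theta_map T (sigma_map A) \<and>
           tau_map symm (theta_map T A) = theta_map T (tau_map symm A)"
proof
  fix A :: "'n W \<Rightarrow> 'n W" assume "A \<in> Ealg full"
  then have lin: "clinear_W A" by (auto simp: Ealg_def split: if_splits)
  then obtain A' where aA: "isadj A A'" using adj_exists by blast
  define C :: "'n W \<Rightarrow> 'n W" where "C = Cmap symm"
  define D :: "'n W \<Rightarrow> 'n W" where "D = Ci symm"
  have DC: "D (C x) = x" for x by (simp add: C_def D_def)
  have CD: "C (D x) = x" for x by (simp add: C_def D_def)
  have Dneg: "D (- x) = - D x" for x by (simp add: D_def Ci_neg)
  have Dun: "winner (D p) (D q) = winner q p" for p q by (simp add: D_def Ci_unitary)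
  have au: "antilinear_W T" and bT: "bij T" and Tu0: "\<And>x y. winner (T x) (T y) = cnj (winner x y)"
    using assms(1) unfolding antiunitary_W_def by blast+
  have Tu: "winner (T p) (T q) = winner q p" for p q by (simp add: Tu0 winner_cnj[of q p])
  have TiT: "T (inv T x) = x" for x using bT by (simp add: bij_def surj_f_inv_f)
  have iTT: "inv T (T x) = x" for x using bT by (simp add: bij_def inv_f_f)
  have m1: "wscale (-1) x = - x" for x :: "'n W"
    by (simp add: wscale_eq prod_eq_iff vec_eq_iff vector_scalar_mult_def)
  have Tneg: "T (- x) = - T x" for x
  proof -
    have "T (wscale (-1) x) = wscale (cnj (-1)) (T x)" using au unfolding antilinear_W_def by blast
    then show ?thesis by (simp add: m1)
  qed
  have TC: "T (C x) = C (T x)" for x using fun_cong[OF assms(2), of x] by (simp add: C_def)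
  have TD: "T (D x) = D (T x)" for x
  proof -
    have "C (T (D x)) = T x" using TC[of "D x"] by (simp add: CD)
    then have "D (C (T (D x))) = D (T x)" by simp
    then show ?thesis by (simp add: DC)
  qed
  have CiT: "C (inv T x) = inv T (C x)" for x
  proof -
    have "T (C (inv T x)) = C x" using TC[of "inv T x"] by (simp add: TiT)
    then have "inv T (T (C (inv T x))) = inv T (C x)" by simp
    then show ?thesis by (simp add: iTT)
  qed
  have adjA: "adj A = A'" by (rule adj_eq[OF aA])
  have btA: "btrans symm A = (\<lambda>y. D (A' (C y)))" unfolding C_def D_def by (rule btrans_adj[OF aA])
  have sA: "sigma_map A = (\<lambda>w. - A' w)" by (simp add: sigma_map_def adjA)
  have tA: "tau_map symm A = (\<lambda>w. - D (A' (C w)))" by (simp add: tau_map_def btA)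
  have thA: "theta_map T A = (\<lambda>x. T (A (inv T x)))" by (simp add: theta_map_def o_def)
  have aA': "isadj A' A" by (rule isadj_sym[OF aA])
  have i1: "isadj (\<lambda>x. D (A' (C x))) (\<lambda>y. D (A (C y)))" by (rule isadj_conj[OF aA' Dun DC])
  have "adj (tau_map symm A) = (\<lambda>y. - D (A (C y)))" unfolding tA
    by (rule adj_eq) (rule isadj_neg[OF i1, simplified])
  then have e1: "sigma_map (tau_map symm A) = (\<lambda>w. D (A (C w)))" by (simp add: sigma_map_def)
  have i2: "isadj (\<lambda>w. - A' w) (\<lambda>w. - A w)" by (rule isadj_neg[OF aA'])
  have "btrans symm (sigma_map A) = (\<lambda>y. D (- A (C y)))" unfolding sA C_def D_def
    by (rule btrans_adj[OF i2])
  then have e2: "tau_map symm (sigma_map A) = (\<lambda>w. D (A (C w)))" by (simp add: tau_map_def Dneg)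
  have i3: "isadj (\<lambda>x. T (A (inv T x))) (\<lambda>y. T (A' (inv T y)))" by (rule isadj_conj[OF aA Tu TiT])
  have adjth: "adj (theta_map T A) = (\<lambda>y. T (A' (inv T y)))" unfolding thA by (rule adj_eq[OF i3])
  have e3: "sigma_map (theta_map T A) = theta_map T (sigma_map A)"
    apply (simp only: sigma_map_def adjth adjA)
    by (simp add: theta_map_def o_def Tneg)
  have btth: "btrans symm (theta_map T A) = (\<lambda>y. D (T (A' (inv T (C y)))))" unfolding thA C_def D_def
    by (rule btrans_adj[OF i3])
  have e4: "tau_map symm (theta_map T A) = theta_map T (tau_map symm A)"
    apply (simp only: tau_map_def btth btA)
    by (simp add: theta_map_def o_def Tneg TD CiT)
  show "sigma_map (tau_map symm A) = tau_map symm (sigma_map A) \<and>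
           sigma_map (theta_map T A) = theta_map T (sigma_map A) \<and>
           tau_map symm (theta_map T A) = theta_map T (tau_map symm A)"
    using e1 e2 e3 e4 by simp
qed

end
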